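(* With the notation below, \[ \frac{J_{30}^3}{\overline{J}_{0,5}}\cdot \frac{J_{3,6}}{J_{3,30}} - 2\cdot \frac{J_{6,60}\overline{J}_{5,30}\overline{J}_{10,30}}{\overline{J}_{0,5}\overline{J}_{0,30}\overline{J}_{3,30}}\cdot \frac{J_{6}J_{60}}{J_{30}^4} \cdot J_{9,30}J_{21,30}J_{15,30}J_{5,30} =0, \] and \[ 4\cdot \frac{J_{6,60}\overline{J}_{5,30}\overline{J}_{10,30}}{\overline{J}_{0,5}\overline{J}_{0,30}\overline{J}_{3,30}} \cdot \frac{J_{6}J_{60}}{J_{30}^4} \cdot J_{16,30}J_{20,30}J_{26,30} J_{10,30} =J_{4,10}J_{3,15}. \]
   Context: Let $q=e^{2\pi i\tau}$ with $\operatorname{Im}\tau>0$. For $x\in\mathbb{C}^*$, $j(x;q):=\sum_{n\in\mathbb{Z}}(-1)^nq^{n(n-1)/2}x^n=(x;q)_\infty(q/x;q)_\infty(q;q)_\infty$. For integers $a$ and positive integers $m$: $J_{a,m}:=j(q^a;q^m)$, $\overline{J}_{a,m}:=j(-q^a;q^m)$, and $J_m:=\prod_{i\ge1}(1-q^{mi})$. *)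

theory Defs
  imports "HOL-Analysis.Analysis"
begin

definition jtheta :: "complex \<Rightarrow> complex \<Rightarrow> complex" where
  "jtheta x q = (\<Sum>\<^sub>\<infinity>n::int. (-1) powi n * q ^ nat (n * (n - 1) div 2) * x powi n)"

definition Jam :: "complex \<Rightarrow> int \<Rightarrow> nat \<Rightarrow> complex" where
  "Jam q a m = jtheta (q powi a) (q ^ m)"

definition Jbar :: "complex \<Rightarrow> int \<Rightarrow> nat \<Rightarrow> complex" where
  "Jbar q a m = jtheta (- (q powi a)) (q ^ m)"

definition Jm :: "complex \<Rightarrow> nat \<Rightarrow> complex" where
  "Jm q m = (\<Prod>i. (1 - q ^ (m * Suc i)))"

end

theory Submission
  imports Defs
begin


lemma tri_Suc: "Suc n * n div 2 = n * (n - 1) div 2 + (n::nat)"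
proof (cases n)
  case 0 then show ?thesis by simp
next
  case (Suc m)
  have "Suc n * n = n * (n - 1) + 2 * n" using Suc by (simp add: algebra_simps)
  then show ?thesis by simp
qed

lemma summable_quad:
  fixes r c :: real assumes r: "0 \<le> r" "r < 1" and c: "0 \<le> c"
  shows "summable (\<lambda>k::nat. r ^ (k*(k-1) div 2) * c ^ k)"
proof -
  have "(\<lambda>n. r ^ n * c) \<longlonglongrightarrow> 0 * c"
    by (intro tendsto_intros) (use r in auto)
  then have "eventually (\<lambda>n. r ^ n * c < 1/2) sequentially"
    by (intro order_tendstoD) auto
  then obtain N where N: "\<And>n. n \<ge> N \<Longrightarrow> r ^ n * c < 1/2"
    by (auto simp: eventually_sequentially)
  show ?thesis
  proof (rule summable_ratio_test[of "1/2" N])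
    fix n assume "n \<ge> N"
    show "norm (r ^ (Suc n * (Suc n - 1) div 2) * c ^ Suc n)
             \<le> 1/2 * norm (r ^ (n * (n - 1) div 2) * c ^ n)"
    proof -
      have e: "r ^ (Suc n * (Suc n - 1) div 2) * c ^ Suc n
              = (r ^ (n * (n - 1) div 2) * c ^ n) * (r ^ n * c)"
      proof -
        have ex: "Suc n * (Suc n - 1) div 2 = n * (n - 1) div 2 + n" using tri_Suc by simp
        show ?thesis unfolding ex by (simp add: power_add mult_ac)
      qed
      have nn: "0 \<le> r ^ (n * (n - 1) div 2) * c ^ n" using r c by simp
      have "(r ^ (n * (n - 1) div 2) * c ^ n) * (r ^ n * c) \<le> (r ^ (n * (n - 1) div 2) * c ^ n) * (1/2)"
        using N[OF \<open>n \<ge> N\<close>] nn by (intro mult_left_mono) auto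
      moreover have "norm (r ^ (Suc n * (Suc n - 1) div 2) * c ^ Suc n) = (r ^ (n * (n - 1) div 2) * c ^ n) * (r ^ n * c)"
        unfolding e using nn r c by (simp add: abs_of_nonneg)
      moreover have "norm (r ^ (n * (n - 1) div 2) * c ^ n) = r ^ (n * (n - 1) div 2) * c ^ n"
        using nn by simp
      ultimately show "norm (r ^ (Suc n * (Suc n - 1) div 2) * c ^ Suc n)
             \<le> 1/2 * norm (r ^ (n * (n - 1) div 2) * c ^ n)" by simp
    qed
  qed simp
qed

lemma summable_quad2:
  fixes r c :: real assumes r: "0 \<le> r" "r < 1" and c: "0 \<le> c"
  shows "summable (\<lambda>k::nat. r ^ (Suc k * Suc (Suc k) div 2) * c ^ Suc k)"
proof -
  have "summable (\<lambda>k::nat. r ^ (Suc k * (Suc k - 1) div 2) * c ^ Suc k)"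
    using summable_quad[OF r c] by (subst summable_Suc_iff)
  then show ?thesis
  proof (rule summable_comparison_test')
    fix n
    have "Suc n * (Suc n - 1) div 2 \<le> Suc n * Suc (Suc n) div 2"
      by (intro div_le_mono mult_le_mono) auto
    then have "r ^ (Suc n * Suc (Suc n) div 2) \<le> r ^ (Suc n * (Suc n - 1) div 2)"
      using r by (intro power_decreasing) auto
    then show "norm (r ^ (Suc n * Suc (Suc n) div 2) * c ^ Suc n) \<le> r ^ (Suc n * (Suc n - 1) div 2) * c ^ Suc n"
      using r c by (simp add: mult_right_mono)
  qed
qed

lemma has_sum_int_split:
  fixes f :: "int \<Rightarrow> complex"
  assumes s1: "summable (\<lambda>k. norm (f (int k)))"
      and s2: "summable (\<lambda>k. norm (f (- int k - 1)))"
  shows "(f has_sum (\<Sum>k. f (int k) + f (- int k - 1))) UNIV"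
proof -
  have a: "(f has_sum (\<Sum>k. f (int k))) (range int)"
  proof -
    have "((f \<circ> int) has_sum (\<Sum>k. f (int k))) UNIV"
      by (rule norm_summable_imp_has_sum) (use s1 in \<open>auto intro: summable_LIMSEQ summable_norm_cancel simp: o_def summable_sums\<close>)
    then show ?thesis by (subst has_sum_reindex) (auto simp: inj_on_def)
  qed
  have b: "(f has_sum (\<Sum>k. f (- int k - 1))) (range (\<lambda>k. - int k - 1))"
  proof -
    have "((f \<circ> (\<lambda>k. - int k - 1)) has_sum (\<Sum>k. f (- int k - 1))) UNIV"
      by (rule norm_summable_imp_has_sum) (use s2 in \<open>auto intro: summable_LIMSEQ summable_norm_cancel simp: o_def summable_sums\<close>)
    then show ?thesis by (subst has_sum_reindex) (auto simp: inj_on_def)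
  qed
  have U: "range int \<union> range (\<lambda>k. - int k - 1) = (UNIV :: int set)"
  proof -
    have "x \<in> range int \<union> range (\<lambda>k. - int k - 1)" for x :: int
    proof (cases "x \<ge> 0")
      case True then have "x = int (nat x)" by simp
      then show ?thesis by blast
    next
      case False then have "x = - int (nat (- x - 1)) - 1" by simp
      then show ?thesis by blast
    qed
    then show ?thesis by blast
  qed
  have "(f has_sum ((\<Sum>k. f (int k)) + (\<Sum>k. f (- int k - 1)))) UNIV"
    using has_sum_Un_disjoint[OF a b] U by fastforce
  moreover have "(\<Sum>k. f (int k)) + (\<Sum>k. f (- int k - 1)) = (\<Sum>k. f (int k) + f (- int k - 1))"
    by (rule suminf_add) (use s1 s2 in \<open>auto intro: summable_norm_cancel\<close>)
  ultimately show ?thesis by simp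
qed



lemma conv_prod_lessThan:
  fixes f :: "nat \<Rightarrow> complex"
  shows "convergent_prod f \<Longrightarrow> (\<lambda>n. \<Prod>i<n. f i) \<longlonglongrightarrow> prodinf f"
  by (rule LIMSEQ_imp_Suc) (simp add: lessThan_Suc_atMost convergent_prod_LIMSEQ)

lemma conv_prod_minus:
  fixes g :: "nat \<Rightarrow> complex"
  assumes "summable (\<lambda>i. norm (g i))"
  shows "convergent_prod (\<lambda>i. 1 - g i)"
  by (rule abs_convergent_prod_imp_convergent_prod, rule summable_imp_abs_convergent_prod) (use assms in simp)

lemma conv_prod_plus:
  fixes g :: "nat \<Rightarrow> complex"
  assumes "summable (\<lambda>i. norm (g i))"
  shows "convergent_prod (\<lambda>i. 1 + g i)"
  by (rule abs_convergent_prod_imp_convergent_prod, rule summable_imp_abs_convergent_prod) (use assms in simp)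

lemma key_field:
  fixes A K D a b :: complex
  assumes "A \<noteq> 0" "K \<noteq> 0" "D \<noteq> 0" "1 - a \<noteq> 0" "1 - b \<noteq> 0"
  shows "A * (1 - a*b) / (K * (1 - a) * (D * (1 - b))) = A / (K * (D * (1 - b))) + a * (A / (K * (1 - a) * D))"
proof -
  define u where "u = 1 - a"  define v where "v = 1 - b"
  have a: "a = 1 - u" and b: "b = 1 - v" by (simp_all add: u_def v_def)
  have "u \<noteq> 0" "v \<noteq> 0" using assms by (auto simp: u_def v_def)
  then show ?thesis unfolding a b using assms(1-3) by (simp add: field_simps)
qed

definition pp :: "complex \<Rightarrow> nat \<Rightarrow> complex" where
  "pp Q n = (\<Prod>i<n. 1 - Q ^ Suc i)"

lemma pow_ne1: fixes Q :: complex assumes "norm Q < 1" shows "Q ^ Suc i \<noteq> 1"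
proof
  assume "Q ^ Suc i = 1"
  then have "norm Q ^ Suc i = 1" by (metis norm_one norm_power)
  moreover have "norm Q ^ Suc i < 1" by (subst power_less_one_iff) (use assms in auto)
  ultimately show False by simp
qed

lemma pp_nz: "norm Q < 1 \<Longrightarrow> pp Q n \<noteq> 0"
  using pow_ne1 by (auto simp: pp_def)

lemma pp_Suc: "pp Q (Suc n) = pp Q n * (1 - Q ^ Suc n)"
  by (simp add: pp_def)

definition gb :: "complex \<Rightarrow> nat \<Rightarrow> nat \<Rightarrow> complex" where
  "gb Q M k = (if k \<le> M then pp Q M / (pp Q k * pp Q (M - k)) else 0)"

lemma gb_0 [simp]: "norm Q < 1 \<Longrightarrow> gb Q M 0 = 1"
  using pp_nz by (simp add: gb_def pp_def)

lemma gb_diag [simp]: "norm Q < 1 \<Longrightarrow> gb Q M M = 1"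
  using pp_nz by (simp add: gb_def pp_def)

lemma gb_gt [simp]: "M < k \<Longrightarrow> gb Q M k = 0"
  by (simp add: gb_def)

lemma gb_sym: "k \<le> M \<Longrightarrow> gb Q M (M - k) = gb Q M k"
  by (simp add: gb_def mult.commute)

lemma gb_pascal:
  assumes Q: "norm Q < 1"
  shows "gb Q (Suc M) (Suc k) = gb Q M k + Q ^ Suc k * gb Q M (Suc k)"
proof (cases "Suc k \<le> M")
  case True
  obtain d where d: "M - k = Suc d" using True by (metis Suc_diff_le Suc_le_D diff_Suc_Suc)
  have Md: "M - Suc k = d" using d by simp
  have pw: "Q ^ Suc k * Q ^ Suc d = Q ^ Suc M"
  proof -
    have "Suc k + Suc d = Suc M" using d True by arith
    then show ?thesis by (metis power_add)
  qed
  have nz: "pp Q M \<noteq> 0" "pp Q k \<noteq> 0" "pp Q d \<noteq> 0" "1 - Q ^ Suc k \<noteq> 0" "1 - Q ^ Suc d \<noteq> 0"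
    using pp_nz[OF Q] pow_ne1[OF Q] by auto
  have "gb Q (Suc M) (Suc k) = pp Q M * (1 - Q ^ Suc M) / (pp Q k * (1 - Q ^ Suc k) * pp Q (M - k))"
    using True by (simp add: gb_def pp_Suc)
  also have "\<dots> = pp Q M * (1 - Q ^ Suc M) / (pp Q k * (1 - Q ^ Suc k) * (pp Q d * (1 - Q ^ Suc d)))"
    by (simp add: d pp_Suc)
  also have "\<dots> = pp Q M / (pp Q k * (pp Q d * (1 - Q ^ Suc d)))
       + Q ^ Suc k * (pp Q M / (pp Q k * (1 - Q ^ Suc k) * pp Q d))"
    using key_field[OF nz] unfolding pw by (simp only: mult.assoc times_divide_eq_right)
  also have "\<dots> = gb Q M k + Q ^ Suc k * gb Q M (Suc k)"
    using True by (simp add: gb_def d Md pp_Suc)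
  finally show ?thesis .
next
  case False
  then show ?thesis
  proof (cases "k = M")
    case True then show ?thesis using Q by simp
  next
    case False
    then show ?thesis using \<open>\<not> Suc k \<le> M\<close> by (simp add: gb_def)
  qed
qed



lemma tri_Suc': "Suc (Suc k) * Suc k div 2 = Suc k * k div 2 + Suc k"
  using tri_Suc[of "Suc k"] by simp

lemma qbinom:
  assumes Q: "norm Q < 1"
  shows "(\<Prod>i<M. 1 + z * Q ^ i) = (\<Sum>j\<le>M. gb Q M j * Q ^ (j*(j-1) div 2) * z ^ j)"
proof (induction M arbitrary: z)
  case 0 then show ?case using Q by simp
next
  case (Suc M)
  define c where "c j = gb Q M j * Q ^ (Suc j * j div 2) * z ^ j" for j
  have L: "(\<Prod>i<Suc M. 1 + z * Q ^ i) = (1 + z) * (\<Prod>i<M. 1 + (z * Q) * Q ^ i)"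
    by (subst prod.lessThan_Suc_shift) (simp add: mult_ac)
  have S: "(\<Prod>i<M. 1 + (z * Q) * Q ^ i) = (\<Sum>j\<le>M. c j)"
  proof -
    have "gb Q M j * Q ^ (j * (j - 1) div 2) * (z * Q) ^ j = c j" for j
    proof -
      have "Q ^ (j * (j - 1) div 2) * Q ^ j = Q ^ (Suc j * j div 2)"
        by (simp only: tri_Suc power_add)
      then show ?thesis unfolding c_def by (simp add: power_mult_distrib mult_ac)
    qed
    then show ?thesis using Suc.IH[of "z * Q"] by simp
  qed
  have c0: "c 0 = 1" using Q by (simp add: c_def)
  have cM: "c (Suc M) = 0" by (simp add: c_def)
  have step: "gb Q (Suc M) (Suc k) * Q ^ (Suc k * (Suc k - 1) div 2) * z ^ Suc k = z * c k + c (Suc k)" for k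
  proof -
    have "Q ^ Suc k * Q ^ (Suc k * k div 2) = Q ^ (Suc (Suc k) * Suc k div 2)"
      by (simp only: tri_Suc' power_add) (simp add: mult.commute)
    then show ?thesis
      unfolding gb_pascal[OF Q] c_def by (auto simp: algebra_simps)
  qed
  have "(\<Sum>j\<le>Suc M. gb Q (Suc M) j * Q ^ (j*(j-1) div 2) * z ^ j)
      = 1 + (\<Sum>k\<le>M. z * c k + c (Suc k))"
    using Q by (simp only: sum.atMost_Suc_shift step) simp
  also have "\<dots> = 1 + z * (\<Sum>k\<le>M. c k) + (\<Sum>k\<le>M. c (Suc k))"
    by (simp add: sum.distrib sum_distrib_left)
  also have "(\<Sum>k\<le>M. c (Suc k)) = (\<Sum>k\<le>M. c k) - 1"
  proof -
    have "(\<Sum>j\<le>Suc M. c j) = c 0 + (\<Sum>k\<le>M. c (Suc k))" by (rule sum.atMost_Suc_shift)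
    moreover have "(\<Sum>j\<le>Suc M. c j) = (\<Sum>k\<le>M. c k)" using cM by simp
    ultimately show ?thesis using c0 by (simp add: eq_diff_eq add.commute)
  qed
  finally show ?case using L S by (simp add: algebra_simps)
qed



definition tt :: "complex \<Rightarrow> complex \<Rightarrow> int \<Rightarrow> complex" where
  "tt Q x n = (-1) powi n * Q ^ nat (n * (n - 1) div 2) * x powi n"

lemma tri_int: "2 * int (k * (k - 1) div 2) = int k * (int k - 1)"
proof -
  have ev: "even (k * (k - 1))" by (cases k) auto
  have "int (k * (k - 1) div 2) * 2 = int (k * (k - 1))"
    using ev by (metis dvd_div_mult_self of_nat_mult of_nat_numeral)
  moreover have "int (k * (k - 1)) = int k * (int k - 1)" by (cases k) (auto simp: algebra_simps)
  ultimately show ?thesis by (cases k) (simp_all add: mult.commute)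
qed

lemma term_id:
  fixes Q x :: complex assumes Q: "Q \<noteq> 0" and x: "x \<noteq> 0"
  shows "Q ^ (Suc N * N div 2) / (-x) ^ N * (Q ^ (j * (j - 1) div 2) * (-x / Q ^ N) ^ j)
        = tt Q x (int j - int N)"
proof -
  define S where "S = Suc N * N div 2"
  define T where "T = j * (j - 1) div 2"
  define n where "n = int j - int N"
  define e where "e = int S + int T - int N * int j"
  have S2: "2 * int S = int N * (int N + 1)"
    using tri_int[of "Suc N"] by (simp add: S_def algebra_simps)
  have T2: "2 * int T = int j * (int j - 1)"
    using tri_int[of j] by (simp add: T_def)
  have e2: "2 * e = n * (n - 1)"
    unfolding e_def n_def using S2 T2 by (simp add: algebra_simps)
  then have e_eq: "e = n * (n - 1) div 2" by simp
  have e_nn: "e \<ge> 0"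
  proof -
    have "n * (n - 1) \<ge> 0" by (cases "n \<ge> 1") (auto simp: mult_nonpos_nonpos zero_le_mult_iff)
    then show ?thesis using e2 by simp
  qed
  have mx: "-x \<noteq> 0" using x by simp
  have "Q ^ S / (-x) ^ N * (Q ^ T * (-x / Q ^ N) ^ j) = (Q ^ S * Q ^ T / Q ^ (N * j)) * ((-x) ^ j / (-x) ^ N)"
    using Q x by (simp add: power_divide power_mult power_minus' field_simps)
  also have "Q ^ S * Q ^ T / Q ^ (N * j) = Q powi e"
  proof -
    have "Q ^ (N * j) = Q powi (int N * int j)" by (metis of_nat_mult power_int_of_nat)
    then show ?thesis unfolding e_def using Q by (simp add: power_int_diff power_int_add flip: power_add)
  qed
  also have "(-x) ^ j / (-x) ^ N = (-x) powi n"
    unfolding n_def using mx by (simp add: power_int_diff)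
  also have "(-x) powi n = (-1) powi n * x powi n"
    by (metis minus_one_mult_self power_int_mult_distrib mult_minus1)
  also have "Q powi e = Q ^ nat (n * (n - 1) div 2)"
    using e_nn e_eq by (metis int_nat_eq power_int_of_nat)
  finally show ?thesis unfolding tt_def S_def T_def n_def by (simp add: mult_ac)
qed



definition aa :: "complex \<Rightarrow> complex \<Rightarrow> nat \<Rightarrow> nat \<Rightarrow> complex" where
  "aa Q x N k = gb Q (2*N) (N+k) * tt Q x (int k) + gb Q (2*N) (N+k+1) * tt Q x (- int k - 1)"

lemma prod_split_add: "(\<Prod>i<N+M. f i) = (\<Prod>i<N. f i) * (\<Prod>i<M. f (N+i))" for f :: "nat \<Rightarrow> 'a::comm_monoid_mult"
  by (induction M) (simp_all add: mult_ac)

lemma sum_split_add: "(\<Sum>i<N+M. f i) = (\<Sum>i<N. f i) + (\<Sum>i<M. f (N+i))" for f :: "nat \<Rightarrow> 'a::comm_monoid_add"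
  by (induction M) (simp_all add: add_ac)

lemma prod_pow_tri: "(\<Prod>i<N. Q ^ Suc i) = Q ^ (Suc N * N div 2)"
proof (induction N)
  case 0 then show ?case by simp
next
  case (Suc N)
  then show ?case using tri_Suc'[of N] by (simp add: power_add mult_ac)
qed

lemma fin_jtp:
  fixes Q x :: complex
  assumes Qn: "norm Q < 1" and Q: "Q \<noteq> 0" and x: "x \<noteq> 0"
  shows "(\<Prod>i<N. 1 - x * Q ^ i) * (\<Prod>i<N. 1 - Q ^ Suc i / x) = (\<Sum>k\<le>N. aa Q x N k)"
proof -
  define z where "z = - x / Q ^ N"
  define f where "f i = 1 + z * Q ^ i" for i
  define S where "S = Suc N * N div 2"
  define W where "W = (-x) ^ N / Q ^ S"
  define h where "h j = gb Q (2*N) j * tt Q x (int j - int N)" for j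
  have W0: "W \<noteq> 0" using Q x by (simp add: W_def)
  have QN: "Q ^ N \<noteq> 0" using Q by simp
  have f2: "f (N + i) = 1 - x * Q ^ i" for i
    using QN Q by (simp add: f_def z_def power_add)
  have f1: "f (N - Suc i) = (- (x / Q ^ Suc i)) * (1 - Q ^ Suc i / x)" if "i < N" for i
  proof -
    have "Q ^ N = Q ^ (N - Suc i) * Q ^ Suc i" using that by (simp only: power_add[symmetric]) simp
    then show ?thesis using Q x QN by (simp add: f_def z_def field_simps)
  qed
  have P1: "(\<Prod>i<N. f i) = W * (\<Prod>i<N. 1 - Q ^ Suc i / x)"
  proof -
    have "(\<Prod>i<N. f i) = (\<Prod>i<N. f (N - Suc i))" by (rule prod.nat_diff_reindex[symmetric])
    also have "\<dots> = (\<Prod>i<N. (- (x / Q ^ Suc i)) * (1 - Q ^ Suc i / x))"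
      by (rule prod.cong) (auto simp: f1)
    also have "\<dots> = (\<Prod>i<N. (- x) / Q ^ Suc i) * (\<Prod>i<N. 1 - Q ^ Suc i / x)"
      by (simp only: prod.distrib[symmetric]) simp
    also have "(\<Prod>i<N. (- x) / Q ^ Suc i) = W"
      unfolding prod_dividef prod_pow_tri W_def S_def by simp
    finally show ?thesis .
  qed
  have "(\<Prod>i<2*N. f i) = (\<Prod>i<N. f i) * (\<Prod>i<N. f (N+i))"
    using prod_split_add[of f N N] by (simp add: mult_2)
  also have "(\<Prod>i<N. f (N+i)) = (\<Prod>i<N. 1 - x * Q ^ i)" by (simp add: f2)
  finally have "(\<Prod>i<2*N. f i) = W * ((\<Prod>i<N. 1 - x * Q ^ i) * (\<Prod>i<N. 1 - Q ^ Suc i / x))"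
    using P1 by (simp add: mult_ac)
  moreover have "(\<Prod>i<2*N. f i) = (\<Sum>j\<le>2*N. gb Q (2*N) j * Q ^ (j*(j-1) div 2) * z ^ j)"
    unfolding f_def by (rule qbinom[OF Qn])
  ultimately have WX: "W * ((\<Prod>i<N. 1 - x * Q ^ i) * (\<Prod>i<N. 1 - Q ^ Suc i / x))
      = (\<Sum>j\<le>2*N. gb Q (2*N) j * Q ^ (j*(j-1) div 2) * z ^ j)" by simp
  have iW: "inverse W = Q ^ S / (-x) ^ N" by (simp add: W_def)
  have "(\<Prod>i<N. 1 - x * Q ^ i) * (\<Prod>i<N. 1 - Q ^ Suc i / x)
      = inverse W * (\<Sum>j\<le>2*N. gb Q (2*N) j * Q ^ (j*(j-1) div 2) * z ^ j)"
  proof -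
    have "(\<Prod>i<N. 1 - x * Q ^ i) * (\<Prod>i<N. 1 - Q ^ Suc i / x)
       = inverse W * (W * ((\<Prod>i<N. 1 - x * Q ^ i) * (\<Prod>i<N. 1 - Q ^ Suc i / x)))"
      using W0 by (simp add: mult.assoc[symmetric])
    then show ?thesis by (simp only: WX)
  qed
  also have "\<dots> = (\<Sum>j\<le>2*N. gb Q (2*N) j * (Q ^ S / (-x) ^ N * (Q ^ (j*(j-1) div 2) * z ^ j)))"
    unfolding iW sum_distrib_left by (simp add: mult_ac)
  also have "\<dots> = (\<Sum>j\<le>2*N. h j)"
    unfolding h_def S_def z_def using term_id[OF Q x] by simp
  also have "\<dots> = (\<Sum>j<N + Suc N. h j)"
    by (simp add: lessThan_Suc_atMost[symmetric] mult_2)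
  also have "\<dots> = (\<Sum>j<N. h j) + (\<Sum>k<Suc N. h (N + k))" by (rule sum_split_add)
  also have "(\<Sum>j<N. h j) = (\<Sum>k<N. h (N - Suc k))" by (rule sum.nat_diff_reindex[symmetric])
  also have "\<dots> = (\<Sum>k<N. gb Q (2*N) (N+k+1) * tt Q x (- int k - 1))"
  proof (rule sum.cong)
    fix k assume "k \<in> {..<N}"
    then have k: "k < N" by simp
    have g: "gb Q (2*N) (N - Suc k) = gb Q (2*N) (N+k+1)"
      using gb_sym[of "N+k+1" "2*N" Q] k by (simp add: mult_2)
    have e: "int (N - Suc k) - int N = - int k - 1" using k by simp
    show "h (N - Suc k) = gb Q (2*N) (N+k+1) * tt Q x (- int k - 1)"
      unfolding h_def by (simp only: g e)
  qed simp
  also have "\<dots> = (\<Sum>k\<le>N. gb Q (2*N) (N+k+1) * tt Q x (- int k - 1))"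
    by (simp only: atMost_Suc lessThan_Suc_atMost[symmetric] sum.lessThan_Suc) simp
  also have "(\<Sum>k<Suc N. h (N + k)) = (\<Sum>k\<le>N. gb Q (2*N) (N+k) * tt Q x (int k))"
    by (simp add: h_def lessThan_Suc_atMost)
  finally show ?thesis by (simp add: aa_def sum.distrib add.commute)
qed



definition Bk :: "real \<Rightarrow> nat \<Rightarrow> real" where
  "Bk r k = (\<Prod>i<k. 1 / (1 - r ^ Suc i))"

lemma pow_lt1: "0 \<le> (r::real) \<Longrightarrow> r < 1 \<Longrightarrow> r ^ Suc i < 1"
  by (cases "r = 0") (auto intro!: power_Suc_less_one simp del: power_Suc)

lemma Bk_pos: "0 \<le> r \<Longrightarrow> r < 1 \<Longrightarrow> Bk r k > 0"
  unfolding Bk_def by (intro prod_pos) (use pow_lt1 in \<open>auto simp del: power_Suc\<close>)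

lemma Bk_Suc: "Bk r (Suc k) = Bk r k / (1 - r ^ Suc k)"
  by (simp add: Bk_def)

lemma gb_bound_Bk:
  assumes Q: "norm Q < 1"
  shows "norm (gb Q M k) \<le> Bk (norm Q) k"
proof (induction M arbitrary: k)
  case 0 then show ?case using Q Bk_pos[of "norm Q" k] by (cases k) (auto simp: Bk_def gb_def pp_def)
next
  case (Suc M)
  show ?case
  proof (cases k)
    case 0 then show ?thesis using Q by (simp add: Bk_def)
  next
    case (Suc k')
    define r where "r = norm Q"
    have r: "0 \<le> r" "r < 1" using Q by (auto simp: r_def)
    have t1: "r ^ Suc k' < 1" using r by (subst power_less_one_iff) auto
    have "norm (gb Q (Suc M) k) \<le> norm (gb Q M k') + r ^ Suc k' * norm (gb Q M (Suc k'))"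
      unfolding Suc gb_pascal[OF Q] r_def by (metis norm_mult norm_power norm_triangle_ineq)
    also have "\<dots> \<le> Bk r k' + r ^ Suc k' * Bk r (Suc k')"
      using Suc.IH[of k'] Suc.IH[of "Suc k'"] r unfolding r_def
      by (intro add_mono mult_left_mono) auto
    also have "\<dots> = Bk r (Suc k')"
      using t1 by (simp add: Bk_Suc field_simps)
    finally show ?thesis by (simp add: Suc r_def)
  qed
qed

lemma Bk_le:
  assumes r: "0 \<le> r" "r < 1"
  shows "Bk r k \<le> exp (r / (1 - r)^2)"
proof -
  have t: "r ^ Suc i < 1" for i using pow_lt1[OF r] .
  have t': "1 - r ^ Suc i \<noteq> 0" for i using t[of i] by simp
  have "Bk r k = (\<Prod>i<k. 1 + r ^ Suc i / (1 - r ^ Suc i))"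
    unfolding Bk_def
  proof (intro prod.cong refl)
    fix i show "1 / (1 - r ^ Suc i) = 1 + r ^ Suc i / (1 - r ^ Suc i)"
      using t'[of i] by (simp add: field_simps del: power_Suc)
  qed
  also have "\<dots> \<le> exp (\<Sum>i<k. r ^ Suc i / (1 - r ^ Suc i))"
    using t r by (intro prod_le_exp_sum) (auto simp: less_imp_le)
  also have "(\<Sum>i<k. r ^ Suc i / (1 - r ^ Suc i)) \<le> (\<Sum>i<k. r / (1 - r) * r ^ i)"
  proof (intro sum_mono)
    fix i
    have a: "r ^ Suc i \<le> r" using r by (simp add: mult_left_le power_le_one)
    have "1 - r \<le> 1 - r ^ Suc i" using a by simp
    moreover have "0 < 1 - r" using r by simp
    ultimately have "r ^ Suc i / (1 - r ^ Suc i) \<le> r ^ Suc i / (1 - r)"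
      using r by (intro divide_left_mono) auto
    then show "r ^ Suc i / (1 - r ^ Suc i) \<le> r / (1 - r) * r ^ i" by (simp add: field_simps)
  qed
  also have "\<dots> = r / (1 - r) * ((1 - r ^ k) / (1 - r))"
    using r by (simp only: sum_distrib_left[symmetric] sum_gp_strict) simp
  also have "\<dots> \<le> r / (1 - r) * (1 / (1 - r))"
    using r by (intro mult_left_mono divide_right_mono) auto
  also have "\<dots> = r / (1 - r)^2" by (simp add: power2_eq_square)
  finally show ?thesis by simp
qed

lemma gb_bound:
  assumes Q: "norm Q < 1"
  shows "norm (gb Q M k) \<le> exp (norm Q / (1 - norm Q)^2)"
  using gb_bound_Bk[OF Q] Bk_le[of "norm Q"] Q by (meson norm_ge_zero order_trans)

lemma summable_pow_Suc:
  fixes Q :: complex assumes "norm Q < 1"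
  shows "summable (\<lambda>i. norm (Q ^ Suc i))"
proof -
  have "summable (\<lambda>i. norm Q * norm Q ^ i)" by (intro summable_mult summable_geometric) (use assms in simp)
  then show ?thesis by (simp add: norm_mult norm_power)
qed

lemma pp_lim:
  assumes Q: "norm Q < 1"
  shows "pp Q \<longlonglongrightarrow> prodinf (\<lambda>i. 1 - Q ^ Suc i)"
  unfolding pp_def[abs_def]
  by (rule conv_prod_lessThan, rule conv_prod_minus, rule summable_pow_Suc[OF Q])

lemma P_nz:
  fixes Q :: complex
  assumes Q: "norm Q < 1"
  shows "prodinf (\<lambda>i. 1 - Q ^ Suc i) \<noteq> 0"
  by (rule prodinf_nonzero, rule conv_prod_minus, rule summable_pow_Suc[OF Q])
     (use pow_ne1[OF Q] in auto)

lemma gb_lim: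
  fixes Q :: complex
  assumes Q: "norm Q < 1"
  shows "(\<lambda>N. gb Q (2*N) (N+d)) \<longlonglongrightarrow> 1 / prodinf (\<lambda>i. 1 - Q ^ Suc i)"
proof (rule LIMSEQ_offset[where k=d])
  define P where "P = prodinf (\<lambda>i. 1 - Q ^ Suc i)"
  have P0: "P \<noteq> 0" using P_nz[OF Q] by (simp add: P_def)
  have L: "pp Q \<longlonglongrightarrow> P" using pp_lim[OF Q] by (simp add: P_def)
  have sub: "(\<lambda>n. pp Q (f n)) \<longlonglongrightarrow> P" if "strict_mono f" for f
    using LIMSEQ_subseq_LIMSEQ[OF L that] by (simp add: o_def)
  have e: "gb Q (2 * (n + d)) (n + d + d) = pp Q (2*n + 2*d) / (pp Q (n + 2*d) * pp Q n)" for n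
  proof -
    have i1: "2 * (n + d) = 2*n + 2*d" and i2: "n + d + d = n + 2*d" and i3: "2*n+2*d - (n+2*d) = n"
      by simp_all
    show ?thesis by (simp only: gb_def i1 i2 i3) simp
  qed
  have "(\<lambda>n. pp Q (2*n + 2*d) / (pp Q (n + 2*d) * pp Q n)) \<longlonglongrightarrow> P / (P * P)"
    by (intro tendsto_intros sub) (auto simp: strict_mono_def P0)
  then show "(\<lambda>n. gb Q (2 * (n + d)) (n + d + d)) \<longlonglongrightarrow> 1 / prodinf (\<lambda>i. 1 - Q ^ Suc i)"
    unfolding e using P0 by (simp add: P_def)
qed



lemma nat_tri_pos: "nat (int k * (int k - 1) div 2) = k * (k - 1) div 2"
proof -
  have "int k * (int k - 1) div 2 = int (k * (k - 1) div 2)"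
    using tri_int[of k] by linarith
  then show ?thesis by simp
qed

lemma nat_tri_neg: "nat ((- int k - 1) * ((- int k - 1) - 1) div 2) = Suc k * Suc (Suc k) div 2"
proof -
  have "(- int k - 1) * ((- int k - 1) - 1) = int (Suc (Suc k)) * (int (Suc (Suc k)) - 1)"
    by (simp add: algebra_simps)
  also have "\<dots> = 2 * int (Suc (Suc k) * (Suc (Suc k) - 1) div 2)" by (rule tri_int[symmetric])
  finally have "(- int k - 1) * ((- int k - 1) - 1) div 2 = int (Suc (Suc k) * Suc k div 2)" by simp
  then show ?thesis by (simp add: mult.commute)
qed

lemma norm_tt_pos: "norm (tt Q x (int k)) = norm Q ^ (k * (k - 1) div 2) * norm x ^ k"
  unfolding tt_def nat_tri_pos by (simp add: norm_mult norm_power)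

lemma norm_tt_neg:
  assumes "x \<noteq> 0"
  shows "norm (tt Q x (- int k - 1)) = norm Q ^ (Suc k * Suc (Suc k) div 2) * (1 / norm x) ^ Suc k"
proof -
  have "norm (x powi (- int k - 1)) = (1 / norm x) ^ Suc k"
  proof -
    have "- int k - 1 = - int (Suc k)" by simp
    then have "x powi (- int k - 1) = inverse (x ^ Suc k)"
      by (simp only: power_int_minus power_int_of_nat)
    moreover have "norm (inverse (x ^ Suc k)) = inverse (norm x ^ Suc k)" by (simp only: norm_inverse norm_power)
    moreover have "(1 / norm x) ^ Suc k = inverse (norm x ^ Suc k)" by (metis power_one_over inverse_eq_divide)
    ultimately show ?thesis by simp
  qed
  moreover have "norm ((-1::complex) powi (- int k - 1)) = 1"
    by (simp add: norm_power_int)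
  ultimately show ?thesis unfolding tt_def nat_tri_neg by (simp only: norm_mult norm_power mult_1_left)
qed

lemma jtp:
  fixes Q x :: complex
  assumes Qn: "norm Q < 1" and Q: "Q \<noteq> 0" and x: "x \<noteq> 0"
  shows "jtheta x Q = prodinf (\<lambda>i. 1 - x * Q ^ i) * prodinf (\<lambda>i. 1 - Q ^ Suc i / x)
                      * prodinf (\<lambda>i. 1 - Q ^ Suc i)"
proof -
  define P where "P = prodinf (\<lambda>i. 1 - Q ^ Suc i)"
  define A where "A = prodinf (\<lambda>i. 1 - x * Q ^ i)"
  define B where "B = prodinf (\<lambda>i. 1 - Q ^ Suc i / x)"
  define K where "K = exp (norm Q / (1 - norm Q)^2)"
  define g1 where "g1 k = norm (tt Q x (int k))" for k
  define g2 where "g2 k = norm (tt Q x (- int k - 1))" for k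
  have P0: "P \<noteq> 0" using P_nz[OF Qn] by (simp add: P_def)
  have s1: "summable g1"
    unfolding g1_def norm_tt_pos by (rule summable_quad) (use Qn in auto)
  have s2: "summable g2"
    unfolding g2_def norm_tt_neg[OF x] by (rule summable_quad2) (use Qn in auto)
  have hs: "(tt Q x has_sum (\<Sum>k. tt Q x (int k) + tt Q x (- int k - 1))) UNIV"
    by (rule has_sum_int_split) (use s1 s2 in \<open>simp_all add: g1_def[abs_def] g2_def[abs_def]\<close>)
  have jt: "jtheta x Q = (\<Sum>k. tt Q x (int k) + tt Q x (- int k - 1))"
  proof -
    have "jtheta x Q = infsum (tt Q x) UNIV" unfolding jtheta_def tt_def by simp
    then show ?thesis using hs by (simp add: infsumI)
  qed
  have sb: "summable (\<lambda>k. tt Q x (int k) + tt Q x (- int k - 1))"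
    by (rule summable_add) (use s1 s2 in \<open>auto intro: summable_norm_cancel simp: g1_def[abs_def] g2_def[abs_def]\<close>)
  define b where "b k = 1 / P * (tt Q x (int k) + tt Q x (- int k - 1))" for k
  have tann: "((\<lambda>N. \<Sum>k. aa Q x N k) \<longlongrightarrow> (\<Sum>k. b k)) sequentially"
  proof -
    have "eventually (\<lambda>n. summable (\<lambda>k. norm (aa Q x n k))) sequentially \<and>
           summable (\<lambda>n. norm (b n)) \<and>
           ((\<lambda>n. suminf (\<lambda>k. aa Q x n k)) \<longlongrightarrow> suminf b) sequentially"
    proof (rule tannerys_theorem[where M = "\<lambda>k. K * (g1 k + g2 k)"])
      fix k
      show "((\<lambda>n. aa Q x n k) \<longlongrightarrow> b k) sequentially"
      proof -
        have l1: "(\<lambda>N. gb Q (2*N) (N+k)) \<longlonglongrightarrow> 1 / P" using gb_lim[OF Qn] by (simp add: P_def)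
        have l2: "(\<lambda>N. gb Q (2*N) (N+(k+1))) \<longlonglongrightarrow> 1 / P" using gb_lim[OF Qn, of "k+1"] unfolding P_def .
        have "(\<lambda>N. gb Q (2*N) (N+k) * tt Q x (int k) + gb Q (2*N) (N+(k+1)) * tt Q x (- int k - 1))
               \<longlonglongrightarrow> 1 / P * tt Q x (int k) + 1 / P * tt Q x (- int k - 1)"
          by (intro tendsto_intros l1 l2)
        then show ?thesis by (simp add: aa_def b_def distrib_left add.assoc)
      qed
    next
      show "eventually (\<lambda>(k,n). norm (aa Q x n k) \<le> K * (g1 k + g2 k)) (at_top \<times>\<^sub>F sequentially)"
      proof (rule always_eventually, clarify)
        fix k n
        have "norm (aa Q x n k) \<le> norm (gb Q (2*n) (n+k)) * g1 k + norm (gb Q (2*n) (n+k+1)) * g2 k"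
          unfolding aa_def g1_def g2_def by (metis norm_mult norm_triangle_ineq)
        also have "\<dots> \<le> K * g1 k + K * g2 k"
          using gb_bound[OF Qn] unfolding K_def g1_def g2_def
          by (intro add_mono mult_right_mono) auto
        finally show "norm (aa Q x n k) \<le> K * (g1 k + g2 k)" by (simp add: distrib_left)
      qed
    next
      show "summable (\<lambda>k. K * (g1 k + g2 k))" by (intro summable_mult summable_add s1 s2)
    qed simp
    then show ?thesis by simp
  qed
  have fin: "(\<Sum>k. aa Q x N k) = (\<Prod>i<N. 1 - x * Q ^ i) * (\<Prod>i<N. 1 - Q ^ Suc i / x)" for N
  proof -
    have "(\<Sum>k. aa Q x N k) = (\<Sum>k\<le>N. aa Q x N k)"
      by (rule suminf_finite) (auto simp: aa_def)
    then show ?thesis using fin_jtp[OF Qn Q x] by simp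
  qed
  have c1: "convergent_prod (\<lambda>i. 1 - x * Q ^ i)"
  proof (rule conv_prod_minus)
    have "summable (\<lambda>i. norm x * norm Q ^ i)" by (intro summable_mult summable_geometric) (use Qn in simp)
    then show "summable (\<lambda>i. norm (x * Q ^ i))" by (simp add: norm_mult norm_power)
  qed
  have c2: "convergent_prod (\<lambda>i. 1 - Q ^ Suc i / x)"
  proof (rule conv_prod_minus)
    have "summable (\<lambda>i. norm (Q ^ Suc i) * (1 / norm x))"
      using summable_pow_Suc[OF Qn] by (rule summable_mult2)
    moreover have "norm (Q ^ Suc i / x) = norm (Q ^ Suc i) * (1 / norm x)" for i
      by (simp add: norm_mult norm_inverse divide_inverse del: power_Suc)
    ultimately show "summable (\<lambda>i. norm (Q ^ Suc i / x))" by simp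
  qed
  have "(\<lambda>N. (\<Prod>i<N. 1 - x * Q ^ i) * (\<Prod>i<N. 1 - Q ^ Suc i / x)) \<longlonglongrightarrow> A * B"
    unfolding A_def B_def by (intro tendsto_mult conv_prod_lessThan c1 c2)
  moreover have "(\<lambda>N. (\<Prod>i<N. 1 - x * Q ^ i) * (\<Prod>i<N. 1 - Q ^ Suc i / x)) \<longlonglongrightarrow> (\<Sum>k. b k)"
    using tann fin by simp
  ultimately have AB: "A * B = (\<Sum>k. b k)" by (rule LIMSEQ_unique)
  also have "\<dots> = 1 / P * jtheta x Q"
    unfolding b_def jt by (rule suminf_mult[OF sb])
  finally have "A * B = 1 / P * jtheta x Q" .
  then have "jtheta x Q = A * B * P" using P0 by (simp add: field_simps)
  then show ?thesis by (simp add: A_def B_def P_def)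
qed



definition PP :: "complex \<Rightarrow> nat \<Rightarrow> nat \<Rightarrow> complex" where
  "PP q a m = prodinf (\<lambda>i. 1 - q ^ (a + m * i))"

definition Pp :: "complex \<Rightarrow> nat \<Rightarrow> nat \<Rightarrow> complex" where
  "Pp q a m = prodinf (\<lambda>i. 1 + q ^ (a + m * i))"

lemma summable_pow_am:
  fixes q :: complex assumes q: "norm q < 1" and m: "m > 0"
  shows "summable (\<lambda>i. norm (q ^ (a + m * i)))"
proof -
  have "norm q ^ m < 1" using q m by (subst power_less_one_iff) auto
  then have "summable (\<lambda>i. norm q ^ a * (norm q ^ m) ^ i)"
    by (intro summable_mult summable_geometric) simp
  moreover have "norm (q ^ (a + m * i)) = norm q ^ a * (norm q ^ m) ^ i" for i
    by (simp only: norm_power norm_mult power_add power_mult)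
  ultimately show ?thesis by simp
qed

lemma conv_PP: fixes q :: complex shows "norm q < 1 \<Longrightarrow> m > 0 \<Longrightarrow> convergent_prod (\<lambda>i. 1 - q ^ (a + m * i))"
  by (intro conv_prod_minus summable_pow_am)

lemma conv_Pp: fixes q :: complex shows "norm q < 1 \<Longrightarrow> m > 0 \<Longrightarrow> convergent_prod (\<lambda>i. 1 + q ^ (a + m * i))"
  by (intro conv_prod_plus summable_pow_am)

lemma pow_ne1':
  fixes q :: complex assumes "norm q < 1" "n > 0" shows "q ^ n \<noteq> 1"
  using pow_ne1[OF assms(1), of "n - 1"] assms(2) by simp

lemma PP_nz: "norm q < 1 \<Longrightarrow> m > 0 \<Longrightarrow> a > 0 \<Longrightarrow> PP q a m \<noteq> 0"
  unfolding PP_def by (rule prodinf_nonzero[OF conv_PP]) (use pow_ne1' in auto)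

lemma Pp_eq:
  assumes q: "norm q < 1" and m: "m > 0" and a: "a > 0"
  shows "Pp q a m = PP q (2*a) (2*m) / PP q a m"
proof -
  have "PP q a m * Pp q a m = prodinf (\<lambda>i. (1 - q ^ (a + m * i)) * (1 + q ^ (a + m * i)))"
    unfolding PP_def Pp_def by (rule prodinf_mult[OF conv_PP[OF q m] conv_Pp[OF q m]])
  also have "\<dots> = PP q (2*a) (2*m)"
    unfolding PP_def
  proof (intro prodinf_cong)
    fix i
    have e: "(a + m*i) + (a + m*i) = 2*a + 2*m*i" by simp
    have "(1 - q ^ (a + m * i)) * (1 + q ^ (a + m * i)) = 1 - q ^ (a + m * i) * q ^ (a + m * i)"
      by (simp add: algebra_simps)
    also have "q ^ (a + m * i) * q ^ (a + m * i) = q ^ (2*a + 2*m*i)"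
      by (simp only: power_add[symmetric] e)
    finally show "(1 - q ^ (a + m * i)) * (1 + q ^ (a + m * i)) = 1 - q ^ (2 * a + 2 * m * i)" .
  qed
  finally show ?thesis using PP_nz[OF q m a] by (simp add: field_simps)
qed

lemma PP_split:
  fixes q :: complex
  assumes q: "norm q < 1" and m: "m > 0" and k: "k > 0"
  shows "PP q a m = (\<Prod>j<k. PP q (a + m*j) (k*m))"
proof -
  define g where "g i = 1 - q ^ (a + m * i)" for i
  have km: "k * m > 0" using k m by simp
  have fin: "(\<Prod>i<N*k. g i) = (\<Prod>j<k. \<Prod>i<N. 1 - q ^ ((a + m*j) + (k*m) * i))" for N
  proof -
    have "(\<Prod>i<N*k. g i) = (\<Prod>n<N. \<Prod>i\<in>{n*k..<n*k+k}. g i)" by (rule prod.nat_group[symmetric])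
    also have "\<dots> = (\<Prod>n<N. \<Prod>j<k. g (j + n*k))"
    proof (rule prod.cong[OF refl])
      fix n
      have "{n*k..<n*k+k} = {0 + n*k..<k + n*k}" by (simp add: add.commute)
      then show "(\<Prod>i\<in>{n*k..<n*k+k}. g i) = (\<Prod>j<k. g (j + n*k))"
        by (simp only: prod.shift_bounds_nat_ivl atLeast0LessThan)
    qed
    also have "\<dots> = (\<Prod>j<k. \<Prod>n<N. g (j + n*k))" by (rule prod.swap)
    also have "\<dots> = (\<Prod>j<k. \<Prod>i<N. 1 - q ^ ((a + m*j) + (k*m) * i))"
      by (intro prod.cong refl) (simp add: g_def algebra_simps)
    finally show ?thesis .
  qed
  have "(\<lambda>N. \<Prod>i<N*k. g i) \<longlonglongrightarrow> PP q a m"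
  proof -
    have L: "(\<lambda>N. \<Prod>i<N. g i) \<longlonglongrightarrow> PP q a m"
      unfolding PP_def g_def by (rule conv_prod_lessThan[OF conv_PP[OF q m]])
    have "strict_mono (\<lambda>N. N * k)" using k by (auto simp: strict_mono_def)
    from LIMSEQ_subseq_LIMSEQ[OF L this] show ?thesis by (simp add: o_def)
  qed
  moreover have "(\<lambda>N. \<Prod>i<N*k. g i) \<longlonglongrightarrow> (\<Prod>j<k. PP q (a + m*j) (k*m))"
    unfolding fin PP_def
    by (intro tendsto_prod conv_prod_lessThan conv_PP[OF q km])
  ultimately show ?thesis by (rule LIMSEQ_unique)
qed

lemma image_residues:
  fixes m N a :: nat
  assumes m: "m > 0" and d: "m dvd N" and a: "1 \<le> a" "a \<le> m"
  shows "(\<lambda>j. a + m*j) ` {..<N div m} = {r\<in>{1..N}. r mod m = a mod m}"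
proof (intro equalityI subsetI)
  fix r assume "r \<in> (\<lambda>j. a + m*j) ` {..<N div m}"
  then obtain j where j: "j < N div m" "r = a + m*j" by auto
  have "Suc j \<le> N div m" using j by simp
  then have "m * Suc j \<le> m * (N div m)" by (rule mult_le_mono2)
  also have "\<dots> = N" using d by simp
  finally have "a + m*j \<le> N" using a by simp
  then show "r \<in> {r\<in>{1..N}. r mod m = a mod m}" using j a by simp
next
  fix r assume r: "r \<in> {r\<in>{1..N}. r mod m = a mod m}"
  then have r1: "1 \<le> r" "r \<le> N" "r mod m = a mod m" by auto
  have ar: "a \<le> r"
  proof (rule ccontr)
    assume "\<not> a \<le> r"
    then have "r < m" using a by simp
    then have "r mod m = r" by simp
    moreover have "a mod m = (if a = m then 0 else a)" using a by auto
    ultimately show False using r1 \<open>\<not> a \<le> r\<close> by (auto split: if_splits)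
  qed
  define j where "j = (r - a) div m"
  have "m dvd (r - a)" using r1 ar by (simp add: mod_eq_dvd_iff_nat)
  then have rj: "r = a + m * j" using ar by (simp add: j_def)
  have "m * j < N" using rj a r1 by simp
  then have "m * j < m * (N div m)" using d by simp
  then have "j < N div m" by simp
  then show "r \<in> (\<lambda>j. a + m*j) ` {..<N div m}" using rj by auto
qed

lemma PP_residues:
  fixes q :: complex
  assumes q: "norm q < 1" and m: "m > 0" and d: "m dvd N" and N: "N > 0" and a: "1 \<le> a" "a \<le> m"
  shows "PP q a m = (\<Prod>r\<in>{r\<in>{1..N}. r mod m = a mod m}. PP q r N)"
proof -
  have k: "N div m > 0" using d N m by (metis dvd_div_eq_0_iff gr0I)
  have "PP q a m = (\<Prod>j<N div m. PP q (a + m*j) (N div m * m))" by (rule PP_split[OF q m k])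
  also have "N div m * m = N" using d by simp
  also have "(\<Prod>j<N div m. PP q (a + m*j) N) = (\<Prod>r\<in>(\<lambda>j. a + m*j) ` {..<N div m}. PP q r N)"
    by (subst prod.reindex) (use m in \<open>auto simp: inj_on_def\<close>)
  also have "(\<lambda>j. a + m*j) ` {..<N div m} = {r\<in>{1..N}. r mod m = a mod m}"
    by (rule image_residues[OF m d a])
  finally show ?thesis .
qed



lemma qm_facts:
  fixes q :: complex assumes q: "norm q < 1" "q \<noteq> 0" and m: "m > 0"
  shows "norm (q ^ m) < 1" "q ^ m \<noteq> 0"
proof -
  show "norm (q ^ m) < 1" using q m by (simp add: norm_power power_less_one_iff)
  show "q ^ m \<noteq> 0" using q by simp
qed

lemma pow_div_aux:
  fixes q :: complex assumes q: "q \<noteq> 0" and a: "a < m"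
  shows "(q ^ m) ^ Suc i / q ^ a = q ^ (m - a + m * i)"
proof -
  have "(q ^ m) ^ Suc i = q ^ a * q ^ (m - a + m * i)"
    using a by (simp flip: power_add power_mult)
  then show ?thesis using q by simp
qed

lemma Jam_PP:
  fixes q :: complex assumes q: "norm q < 1" "q \<noteq> 0" and a: "0 < a" "a < m"
  shows "Jam q (int a) m = PP q a m * PP q (m - a) m * PP q m m"
proof -
  have m: "m > 0" using a by simp
  have "Jam q (int a) m = jtheta (q ^ a) (q ^ m)" by (simp add: Jam_def)
  also have "\<dots> = prodinf (\<lambda>i. 1 - q ^ a * (q ^ m) ^ i) * prodinf (\<lambda>i. 1 - (q ^ m) ^ Suc i / q ^ a)
                      * prodinf (\<lambda>i. 1 - (q ^ m) ^ Suc i)"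
    by (rule jtp[OF qm_facts[OF q m]]) (use q in simp)
  also have "prodinf (\<lambda>i. 1 - q ^ a * (q ^ m) ^ i) = PP q a m"
    unfolding PP_def by (intro prodinf_cong) (simp add: power_add power_mult)
  also have "prodinf (\<lambda>i. 1 - (q ^ m) ^ Suc i / q ^ a) = PP q (m - a) m"
    unfolding PP_def by (intro prodinf_cong) (simp only: pow_div_aux[OF q(2) a(2)])
  also have "prodinf (\<lambda>i. 1 - (q ^ m) ^ Suc i) = PP q m m"
    unfolding PP_def by (intro prodinf_cong) (simp add: power_add power_mult)
  finally show ?thesis .
qed

lemma Jbar_Pp:
  fixes q :: complex assumes q: "norm q < 1" "q \<noteq> 0" and a: "0 < a" "a < m"
  shows "Jbar q (int a) m = Pp q a m * Pp q (m - a) m * PP q m m"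
proof -
  have m: "m > 0" using a by simp
  have "Jbar q (int a) m = jtheta (- (q ^ a)) (q ^ m)" by (simp add: Jbar_def)
  also have "\<dots> = prodinf (\<lambda>i. 1 - (- (q ^ a)) * (q ^ m) ^ i) * prodinf (\<lambda>i. 1 - (q ^ m) ^ Suc i / (- (q ^ a)))
                      * prodinf (\<lambda>i. 1 - (q ^ m) ^ Suc i)"
    by (rule jtp[OF qm_facts[OF q m]]) (use q in simp)
  also have "prodinf (\<lambda>i. 1 - (- (q ^ a)) * (q ^ m) ^ i) = Pp q a m"
    unfolding Pp_def by (intro prodinf_cong) (simp add: power_add power_mult)
  also have "prodinf (\<lambda>i. 1 - (q ^ m) ^ Suc i / (- (q ^ a))) = Pp q (m - a) m"
    unfolding Pp_def by (intro prodinf_cong) (simp only: divide_minus_right pow_div_aux[OF q(2) a(2)] diff_minus_eq_add)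
  also have "prodinf (\<lambda>i. 1 - (q ^ m) ^ Suc i) = PP q m m"
    unfolding PP_def by (intro prodinf_cong) (simp add: power_add power_mult)
  finally show ?thesis .
qed

lemma Jbar0_Pp:
  fixes q :: complex assumes q: "norm q < 1" "q \<noteq> 0" and m: "0 < m"
  shows "Jbar q 0 m = 2 * Pp q m m * Pp q m m * PP q m m"
proof -
  have "Jbar q 0 m = jtheta (- 1) (q ^ m)" by (simp add: Jbar_def)
  also have "\<dots> = prodinf (\<lambda>i. 1 - (- 1) * (q ^ m) ^ i) * prodinf (\<lambda>i. 1 - (q ^ m) ^ Suc i / (- 1))
                      * prodinf (\<lambda>i. 1 - (q ^ m) ^ Suc i)"
    by (rule jtp[OF qm_facts[OF q m]]) simp
  also have "prodinf (\<lambda>i. 1 - (- 1) * (q ^ m) ^ i) = 2 * Pp q m m"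
  proof -
    have c: "convergent_prod (\<lambda>i. 1 + q ^ (0 + m * i))" by (rule conv_Pp[OF q(1) m])
    have "prodinf (\<lambda>i. 1 + q ^ (0 + m * Suc i)) = prodinf (\<lambda>i. 1 + q ^ (0 + m * i)) / 2"
      using prodinf_split_head[OF c] by simp
    moreover have "prodinf (\<lambda>i. 1 + q ^ (0 + m * Suc i)) = Pp q m m"
      unfolding Pp_def by (intro prodinf_cong) simp
    moreover have "prodinf (\<lambda>i. 1 - (- 1) * (q ^ m) ^ i) = prodinf (\<lambda>i. 1 + q ^ (0 + m * i))"
      by (intro prodinf_cong) (simp add: power_mult)
    ultimately show ?thesis by (simp add: mult.commute)
  qed
  also have "prodinf (\<lambda>i. 1 - (q ^ m) ^ Suc i / (- 1)) = Pp q m m"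
    unfolding Pp_def by (intro prodinf_cong) (simp add: power_add power_mult)
  also have "prodinf (\<lambda>i. 1 - (q ^ m) ^ Suc i) = PP q m m"
    unfolding PP_def by (intro prodinf_cong) (simp add: power_add power_mult)
  finally show ?thesis by (simp add: mult_ac)
qed

lemma Jm_PP: "Jm q m = PP q m m"
  unfolding Jm_def PP_def by (intro prodinf_cong) (simp add: algebra_simps)



definition EE :: "nat \<Rightarrow> nat \<Rightarrow> nat \<Rightarrow> int" where
  "EE m a r = (if r mod m = a mod m then 1 else 0)"

definition Phi :: "complex \<Rightarrow> (nat \<Rightarrow> int) \<Rightarrow> complex" where
  "Phi q e = (\<Prod>r\<in>{1..120}. PP q r 120 powi e r)"

lemma F_nz: "norm q < 1 \<Longrightarrow> r \<in> {1..120} \<Longrightarrow> PP q r 120 \<noteq> 0"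
  by (rule PP_nz) auto

lemma Phi_nz: "norm q < 1 \<Longrightarrow> Phi q e \<noteq> 0"
  unfolding Phi_def using F_nz by (auto simp: prod_zero_iff power_int_0_left_if)

lemma Phi_mult: "norm q < 1 \<Longrightarrow> Phi q e1 * Phi q e2 = Phi q (\<lambda>r. e1 r + e2 r)"
  unfolding Phi_def prod.distrib[symmetric]
  by (intro prod.cong refl) (simp add: power_int_add F_nz)

lemma Phi_pow: "norm q < 1 \<Longrightarrow> Phi q e ^ n = Phi q (\<lambda>r. int n * e r)"
  unfolding Phi_def prod_power_distrib
  by (intro prod.cong refl) (simp only: mult.commute[of "int n"] power_int_mult power_int_of_nat)

lemma Phi_cong: "list_all (\<lambda>r. e1 r = e2 r) [1..<121] \<Longrightarrow> Phi q e1 = Phi q e2"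
  unfolding Phi_def list_all_iff by (intro prod.cong refl) auto

lemma PP_Phi:
  fixes q :: complex
  assumes q: "norm q < 1" and m: "m > 0" "m dvd 120" and a: "1 \<le> a" "a \<le> m"
  shows "PP q a m = Phi q (EE m a)"
proof -
  have "PP q a m = (\<Prod>r\<in>{r\<in>{1..120}. r mod m = a mod m}. PP q r 120)"
    by (rule PP_residues[OF q m(1) m(2) _ a]) simp
  also have "\<dots> = (\<Prod>r\<in>{1..120}. if r mod m = a mod m then PP q r 120 else 1)"
    by (rule prod.inter_filter) simp
  also have "\<dots> = Phi q (EE m a)"
    unfolding Phi_def EE_def by (intro prod.cong refl) simp
  finally show ?thesis .
qed



lemma Phi_div: "norm q < 1 \<Longrightarrow> Phi q e1 / Phi q e2 = Phi q (\<lambda>r. e1 r - e2 r)"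
  unfolding Phi_def prod_dividef[symmetric]
  by (intro prod.cong refl) (simp add: power_int_diff F_nz)

lemma Jam_Phi:
  fixes q :: complex assumes q: "norm q < 1" "q \<noteq> 0" and a: "0 < a" "a < m" and d: "m dvd 120"
  shows "Jam q (int a) m = Phi q (\<lambda>r. EE m a r + EE m (m - a) r + EE m m r)"
proof -
  have m: "m > 0" using a by simp
  have e1: "PP q a m = Phi q (EE m a)" by (rule PP_Phi) (use a m d q in auto)
  have e2: "PP q (m - a) m = Phi q (EE m (m - a))" by (rule PP_Phi) (use a m d q in auto)
  have e3: "PP q m m = Phi q (EE m m)" by (rule PP_Phi) (use a m d q in auto)
  show ?thesis
    unfolding Jam_PP[OF q a] e1 e2 e3 by (simp add: Phi_mult[OF q(1)])
qed

lemma Pp_Phi: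
  fixes q :: complex assumes q: "norm q < 1" "q \<noteq> 0" and a: "0 < a" "a \<le> m" and d: "2 * m dvd 120"
  shows "Pp q a m = Phi q (\<lambda>r. EE (2*m) (2*a) r - EE m a r)"
proof -
  have m: "m > 0" using a by simp
  have d1: "m dvd 120" using d by (metis dvd_mult_right)
  have m2: "2 * m > 0" using m by simp
  have e1: "PP q a m = Phi q (EE m a)" by (rule PP_Phi) (use a m d1 q in auto)
  have e2: "PP q (2*a) (2*m) = Phi q (EE (2*m) (2*a))" by (rule PP_Phi) (use a m2 d q in auto)
  show ?thesis
    unfolding Pp_eq[OF q(1) m a(1)] e1 e2 by (simp add: Phi_div[OF q(1)])
qed

lemma Jbar_Phi:
  fixes q :: complex assumes q: "norm q < 1" "q \<noteq> 0" and a: "0 < a" "a < m" and d: "2 * m dvd 120"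
  shows "Jbar q (int a) m = Phi q (\<lambda>r. (EE (2*m) (2*a) r - EE m a r) + (EE (2*m) (2*(m-a)) r - EE m (m-a) r) + EE m m r)"
proof -
  have m: "m > 0" using a by simp
  have d1: "m dvd 120" using d by (metis dvd_mult_right)
  have e1: "Pp q a m = Phi q (\<lambda>r. EE (2*m) (2*a) r - EE m a r)" by (rule Pp_Phi) (use a m d q in auto)
  have e2: "Pp q (m - a) m = Phi q (\<lambda>r. EE (2*m) (2*(m-a)) r - EE m (m-a) r)" by (rule Pp_Phi) (use a m d q in auto)
  have e3: "PP q m m = Phi q (EE m m)" by (rule PP_Phi) (use a m d1 q in auto)
  show ?thesis
    unfolding Jbar_Pp[OF q a] e1 e2 e3 by (simp add: Phi_mult[OF q(1)])
qed

lemma Jbar0_Phi: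
  fixes q :: complex assumes q: "norm q < 1" "q \<noteq> 0" and m: "0 < m" and d: "2 * m dvd 120"
  shows "Jbar q 0 m = 2 * Phi q (\<lambda>r. (EE (2*m) (2*m) r - EE m m r) + (EE (2*m) (2*m) r - EE m m r) + EE m m r)"
proof -
  have d1: "m dvd 120" using d by (metis dvd_mult_right)
  have e1: "Pp q m m = Phi q (\<lambda>r. EE (2*m) (2*m) r - EE m m r)" by (rule Pp_Phi) (use m d q in auto)
  have e3: "PP q m m = Phi q (EE m m)" by (rule PP_Phi) (use m d1 q in auto)
  show ?thesis
    unfolding Jbar0_Pp[OF q m] e1 e3 by (simp only: Phi_mult[OF q(1)] mult.assoc)
qed

lemma Jm_Phi:
  fixes q :: complex assumes q: "norm q < 1" and m: "0 < m" and d: "m dvd 120"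
  shows "Jm q m = Phi q (EE m m)"
  unfolding Jm_PP using PP_Phi[OF q m d, of m] m by simp

lemma eq1_abs:
  fixes A B C D E F G H I K L M N Z R b h :: complex
  assumes "B = 2 * b" "H = 2 * h" "A \<noteq> 0" "b \<noteq> 0" "D \<noteq> 0" "h \<noteq> 0" "I \<noteq> 0"
    and "A ^ 7 * C * h * I = D * E * F * G * K * L * M * N * Z * R"
  shows "A ^ 3 / B * (C / D) - 2 * (E * F * G / (B * H * I)) * (K * L / A ^ 4) * M * N * Z * R = 0"
proof -
  have "A ^ 3 / B * (C / D) = A ^ 7 * C * h * I / (2 * b * D * h * I * A ^ 4)"
    using assms by (simp add: field_simps power_add[symmetric] eval_nat_numeral)
  also have "\<dots> = D * E * F * G * K * L * M * N * Z * R / (2 * b * D * h * I * A ^ 4)"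
    using assms(8) by simp
  also have "\<dots> = 2 * (E * F * G / (B * H * I)) * (K * L / A ^ 4) * M * N * Z * R"
    using assms by (simp add: field_simps)
  finally show ?thesis by simp
qed

lemma eq2_abs:
  fixes A B E F G H I K L S T U V W X b h :: complex
  assumes "B = 2 * b" "H = 2 * h" "A \<noteq> 0" "b \<noteq> 0" "h \<noteq> 0" "I \<noteq> 0"
    and "E * F * G * K * L * S * T * U * V = W * X * b * h * I * A ^ 4"
  shows "4 * (E * F * G / (B * H * I)) * (K * L / A ^ 4) * S * T * U * V = W * X"
proof -
  have "4 * (E * F * G / (B * H * I)) * (K * L / A ^ 4) * S * T * U * V
      = (E * F * G * K * L * S * T * U * V) / (b * h * I * A ^ 4)"
    using assms by (simp add: field_simps)
  also have "\<dots> = W * X" using assms by (simp add: field_simps)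
  finally show ?thesis .
qed



theorem lemma2p3:
  fixes \<tau> q :: complex
  assumes "Im \<tau> > 0"
    and "q = exp (2 * of_real pi * \<i> * \<tau>)"
  shows "((Jm q 30) ^ 3 / Jbar q 0 5 * (Jam q 3 6 / Jam q 3 30)
         - 2 * (Jam q 6 60 * Jbar q 5 30 * Jbar q 10 30
                / (Jbar q 0 5 * Jbar q 0 30 * Jbar q 3 30))
             * (Jm q 6 * Jm q 60 / (Jm q 30) ^ 4)
             * Jam q 9 30 * Jam q 21 30 * Jam q 15 30 * Jam q 5 30 = 0)
    \<and> (4 * (Jam q 6 60 * Jbar q 5 30 * Jbar q 10 30
                / (Jbar q 0 5 * Jbar q 0 30 * Jbar q 3 30))
             * (Jm q 6 * Jm q 60 / (Jm q 30) ^ 4)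
             * Jam q 16 30 * Jam q 20 30 * Jam q 26 30 * Jam q 10 30
         = Jam q 4 10 * Jam q 3 15)"
proof -
  have nq: "norm q < 1"
  proof -
    have "norm q = exp (Re (2 * of_real pi * \<i> * \<tau>))" using assms(2) by (simp add: norm_exp_eq_Re)
    also have "Re (2 * of_real pi * \<i> * \<tau>) = - 2 * pi * Im \<tau>" by simp
    finally show ?thesis using assms(1) pi_gt_zero by (simp add: mult_pos_pos)
  qed
  have q0: "q \<noteq> 0" using assms(2) by simp
  note JA = Jam_Phi[OF nq q0]
  note JB = Jbar_Phi[OF nq q0]
  have J36: "Jam q 3 6 = Phi q (\<lambda>r. EE 6 3 r + EE 6 3 r + EE 6 6 r)" using JA[of 3 6] by simp
  have J330: "Jam q 3 30 = Phi q (\<lambda>r. EE 30 3 r + EE 30 27 r + EE 30 30 r)" using JA[of 3 30] by simp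
  have J660: "Jam q 6 60 = Phi q (\<lambda>r. EE 60 6 r + EE 60 54 r + EE 60 60 r)" using JA[of 6 60] by simp
  have J930: "Jam q 9 30 = Phi q (\<lambda>r. EE 30 9 r + EE 30 21 r + EE 30 30 r)" using JA[of 9 30] by simp
  have J2130: "Jam q 21 30 = Phi q (\<lambda>r. EE 30 21 r + EE 30 9 r + EE 30 30 r)" using JA[of 21 30] by simp
  have J1530: "Jam q 15 30 = Phi q (\<lambda>r. EE 30 15 r + EE 30 15 r + EE 30 30 r)" using JA[of 15 30] by simp
  have J530: "Jam q 5 30 = Phi q (\<lambda>r. EE 30 5 r + EE 30 25 r + EE 30 30 r)" using JA[of 5 30] by simp
  have J1630: "Jam q 16 30 = Phi q (\<lambda>r. EE 30 16 r + EE 30 14 r + EE 30 30 r)" using JA[of 16 30] by simp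
  have J2030: "Jam q 20 30 = Phi q (\<lambda>r. EE 30 20 r + EE 30 10 r + EE 30 30 r)" using JA[of 20 30] by simp
  have J2630: "Jam q 26 30 = Phi q (\<lambda>r. EE 30 26 r + EE 30 4 r + EE 30 30 r)" using JA[of 26 30] by simp
  have J1030: "Jam q 10 30 = Phi q (\<lambda>r. EE 30 10 r + EE 30 20 r + EE 30 30 r)" using JA[of 10 30] by simp
  have J410: "Jam q 4 10 = Phi q (\<lambda>r. EE 10 4 r + EE 10 6 r + EE 10 10 r)" using JA[of 4 10] by simp
  have J315: "Jam q 3 15 = Phi q (\<lambda>r. EE 15 3 r + EE 15 12 r + EE 15 15 r)" using JA[of 3 15] by simp
  have B530: "Jbar q 5 30 = Phi q (\<lambda>r. (EE 60 10 r - EE 30 5 r) + (EE 60 50 r - EE 30 25 r) + EE 30 30 r)"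
    using JB[of 5 30] by simp
  have B1030: "Jbar q 10 30 = Phi q (\<lambda>r. (EE 60 20 r - EE 30 10 r) + (EE 60 40 r - EE 30 20 r) + EE 30 30 r)"
    using JB[of 10 30] by simp
  have B330: "Jbar q 3 30 = Phi q (\<lambda>r. (EE 60 6 r - EE 30 3 r) + (EE 60 54 r - EE 30 27 r) + EE 30 30 r)"
    using JB[of 3 30] by simp
  have B05: "Jbar q 0 5 = 2 * Phi q (\<lambda>r. (EE 10 10 r - EE 5 5 r) + (EE 10 10 r - EE 5 5 r) + EE 5 5 r)"
    using Jbar0_Phi[OF nq q0, of 5] by simp
  have B030: "Jbar q 0 30 = 2 * Phi q (\<lambda>r. (EE 60 60 r - EE 30 30 r) + (EE 60 60 r - EE 30 30 r) + EE 30 30 r)"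
    using Jbar0_Phi[OF nq q0, of 30] by simp
  have M30: "Jm q 30 = Phi q (EE 30 30)" by (rule Jm_Phi[OF nq]) simp_all
  have M6: "Jm q 6 = Phi q (EE 6 6)" by (rule Jm_Phi[OF nq]) simp_all
  have M60: "Jm q 60 = Phi q (EE 60 60)" by (rule Jm_Phi[OF nq]) simp_all
  note PN = Phi_nz[OF nq]
  note defs = J36 J330 J660 J930 J2130 J1530 J530 J1630 J2030 J2630 J1030 J410 J315 B530 B1030 B330 M30 M6 M60
  show ?thesis
  proof
    show "(Jm q 30) ^ 3 / Jbar q 0 5 * (Jam q 3 6 / Jam q 3 30)
         - 2 * (Jam q 6 60 * Jbar q 5 30 * Jbar q 10 30
                / (Jbar q 0 5 * Jbar q 0 30 * Jbar q 3 30))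
             * (Jm q 6 * Jm q 60 / (Jm q 30) ^ 4)
             * Jam q 9 30 * Jam q 21 30 * Jam q 15 30 * Jam q 5 30 = 0"
    proof (rule eq1_abs[OF B05 B030])
      show "Jm q 30 \<noteq> 0" "Jam q 3 30 \<noteq> 0" "Jbar q 3 30 \<noteq> 0" by (simp_all only: defs PN not_False_eq_True)
    qed (simp_all only: defs PN not_False_eq_True Phi_pow[OF nq] Phi_mult[OF nq], (rule Phi_cong, code_simp))
  next
    show "4 * (Jam q 6 60 * Jbar q 5 30 * Jbar q 10 30
                / (Jbar q 0 5 * Jbar q 0 30 * Jbar q 3 30))
             * (Jm q 6 * Jm q 60 / (Jm q 30) ^ 4)
             * Jam q 16 30 * Jam q 20 30 * Jam q 26 30 * Jam q 10 30
         = Jam q 4 10 * Jam q 3 15"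
    proof (rule eq2_abs[OF B05 B030])
      show "Jm q 30 \<noteq> 0" "Jbar q 3 30 \<noteq> 0" by (simp_all only: defs PN not_False_eq_True)
    qed (simp_all only: defs PN not_False_eq_True Phi_pow[OF nq] Phi_mult[OF nq], (rule Phi_cong, code_simp))
  qed
qed


end
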